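(* Let $\alpha>1/2$, $d\in\mathbb N$, $1\ge\gamma_1\ge\dots\ge\gamma_d>0$, and $m\in\mathbb N_0$. Then $$K^\alpha_{2^{m-(d-1)},\boldsymbol\gamma,d}\subseteq Q^\alpha_{m,\boldsymbol\gamma,d}\subseteq K^\alpha_{2^m,\boldsymbol\gamma,d}.$$
   Context: For $\gamma>0$, $h\in\mathbb Z$: $r_\alpha(\gamma,h)=\max(|h|^{2\alpha}/\gamma,1)$, and $r_\alpha(\boldsymbol\gamma,\boldsymbol k)=\prod_{j=1}^dr_\alpha(\gamma_j,k_j)$ for $\boldsymbol k\in\mathbb Z^d$. For $\nu>0$, the weighted continuous hyperbolic cross is $K^\alpha_{\nu,\boldsymbol\gamma,d}=\{\boldsymbol k\in\mathbb Z^d:r_\alpha(\boldsymbol\gamma,\boldsymbol k)\le\nu\}$. The weighted step hyperbolic cross is $Q^\alpha_{m,\boldsymbol\gamma,d}=\bigcup_{\boldsymbol t\in\mathbb N_0^d,\ \|\boldsymbol t\|_1=m}\{\boldsymbol k\in\mathbb Z^d:r_\alpha(\gamma_j,k_j)\le2^{t_j}\ \forall j\in[d]\}$. *)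

theory Defs
  imports Complex_Main
begin

text \<open>Vectors in Z^d are represented as functions nat => int indexed by {1..d},
  vanishing outside {1..d}.\<close>

definition r_alpha :: "real \<Rightarrow> real \<Rightarrow> int \<Rightarrow> real" where
  "r_alpha \<alpha> g h = max (\<bar>real_of_int h\<bar> powr (2 * \<alpha>) / g) 1"

definition r_alpha_vec :: "real \<Rightarrow> nat \<Rightarrow> (nat \<Rightarrow> real) \<Rightarrow> (nat \<Rightarrow> int) \<Rightarrow> real" where
  "r_alpha_vec \<alpha> d \<gamma> k = (\<Prod>j = 1..d. r_alpha \<alpha> (\<gamma> j) (k j))"

definition lattice_vecs :: "nat \<Rightarrow> (nat \<Rightarrow> int) set" where
  "lattice_vecs d = {k. \<forall>j. j \<notin> {1..d} \<longrightarrow> k j = 0}"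

definition hypcross_K :: "real \<Rightarrow> real \<Rightarrow> (nat \<Rightarrow> real) \<Rightarrow> nat \<Rightarrow> (nat \<Rightarrow> int) set" where
  "hypcross_K \<alpha> \<nu> \<gamma> d = {k \<in> lattice_vecs d. r_alpha_vec \<alpha> d \<gamma> k \<le> \<nu>}"

definition hypcross_Q :: "real \<Rightarrow> nat \<Rightarrow> (nat \<Rightarrow> real) \<Rightarrow> nat \<Rightarrow> (nat \<Rightarrow> int) set" where
  "hypcross_Q \<alpha> m \<gamma> d = (\<Union>t \<in> {t :: nat \<Rightarrow> nat. (\<Sum>j = 1..d. t j) = m}.
      {k \<in> lattice_vecs d. \<forall>j \<in> {1..d}. r_alpha \<alpha> (\<gamma> j) (k j) \<le> 2 ^ t j})"

end

theory Submission
  imports Defs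
begin

lemma log2_prod: "finite I \<Longrightarrow> (\<And>i. i \<in> I \<Longrightarrow> f i > 0) \<Longrightarrow> log 2 (prod f I) = (\<Sum>i\<in>I. log 2 (f i))"
proof -
  assume a: "finite I" "\<And>i. i \<in> I \<Longrightarrow> f i > 0"
  have "ln (prod f I) = (\<Sum>i\<in>I. ln (f i))"
    using a by (intro ln_prod) (auto dest: a(2))
  thus ?thesis unfolding log_def by (simp add: sum_divide_distrib)
qed

lemma r_ge1: "r_alpha a g h \<ge> 1"
  unfolding r_alpha_def by simp

lemma t_ok:
  fixes r :: real assumes "r \<ge> 1"
  shows "r \<le> 2 ^ nat \<lceil>log 2 r\<rceil>" and "real (nat \<lceil>log 2 r\<rceil>) < log 2 r + 1"
proof -
  have l0: "log 2 r \<ge> 0" using assms by simp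
  have "r = 2 powr log 2 r" using assms by simp
  also have "\<dots> \<le> 2 powr real_of_int \<lceil>log 2 r\<rceil>"
    by (intro powr_mono) auto
  also have "\<dots> = 2 powr real (nat \<lceil>log 2 r\<rceil>)" using l0 by simp
  also have "\<dots> = 2 ^ nat \<lceil>log 2 r\<rceil>" by (simp add: powr_realpow)
  finally show "r \<le> 2 ^ nat \<lceil>log 2 r\<rceil>" .
  have "real (nat \<lceil>log 2 r\<rceil>) = of_int \<lceil>log 2 r\<rceil>" using l0 by simp
  then show "real (nat \<lceil>log 2 r\<rceil>) < log 2 r + 1" using ceiling_correct[of "log 2 r"] by linarith
qed

theorem lemma3p17:
  fixes \<alpha> :: real and d m :: nat and \<gamma> :: "nat \<Rightarrow> real"
  assumes "\<alpha> > 1/2" and "d \<ge> 1"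
    and "\<gamma> 1 \<le> 1"
    and "\<And>i j. 1 \<le> i \<Longrightarrow> i \<le> j \<Longrightarrow> j \<le> d \<Longrightarrow> \<gamma> j \<le> \<gamma> i"
    and "\<gamma> d > 0"
  shows "hypcross_K \<alpha> (2 powr (real m - (real d - 1))) \<gamma> d \<subseteq> hypcross_Q \<alpha> m \<gamma> d
       \<and> hypcross_Q \<alpha> m \<gamma> d \<subseteq> hypcross_K \<alpha> (2 ^ m) \<gamma> d"
proof
  show "hypcross_K \<alpha> (2 powr (real m - (real d - 1))) \<gamma> d \<subseteq> hypcross_Q \<alpha> m \<gamma> d"
  proof
    fix k assume "k \<in> hypcross_K \<alpha> (2 powr (real m - (real d - 1))) \<gamma> d"
    then have kL: "k \<in> lattice_vecs d" and kr: "r_alpha_vec \<alpha> d \<gamma> k \<le> 2 powr (real m - (real d - 1))"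
      unfolding hypcross_K_def by auto
    define r where "r j = r_alpha \<alpha> (\<gamma> j) (k j)" for j
    define t where "t j = nat \<lceil>log 2 (r j)\<rceil>" for j
    have r1: "r j \<ge> 1" for j unfolding r_def by (rule r_ge1)
    have rt: "r j \<le> 2 ^ t j" for j unfolding t_def using t_ok(1)[OF r1] .
    have "real (\<Sum>j=1..d. t j) = (\<Sum>j=1..d. real (t j))" by simp
    also have "\<dots> < (\<Sum>j=1..d. log 2 (r j) + 1)"
      using assms(2) by (intro sum_strict_mono) (auto simp: t_def intro: t_ok(2)[OF r1])
    also have "\<dots> = log 2 (\<Prod>j=1..d. r j) + d"
      proof -
      have "log 2 (\<Prod>j=1..d. r j) = (\<Sum>j=1..d. log 2 (r j))"
        using r1 by (intro log2_prod) (auto intro: less_le_trans[OF zero_less_one])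
      thus ?thesis by (simp add: sum.distrib)
    qed
    also have "log 2 (\<Prod>j=1..d. r j) \<le> log 2 (2 powr (real m - (real d - 1)))"
    proof -
      have "0 < (\<Prod>j=1..d. r j)" using r1 by (intro prod_pos) (auto intro: less_le_trans[OF zero_less_one])
      thus ?thesis using kr by (subst log_le_cancel_iff) (auto simp: r_alpha_vec_def r_def)
    qed
    finally have "real (\<Sum>j=1..d. t j) < real m + 1" by simp
    hence ts: "(\<Sum>j=1..d. t j) \<le> m" by linarith
    define t' where "t' = t(1 := t 1 + (m - (\<Sum>j=1..d. t j)))"
    have "(\<Sum>j=1..d. t' j) = t' 1 + (\<Sum>j=2..d. t' j)"
      using assms(2) by (simp add: sum.atLeast_Suc_atMost numeral_2_eq_2)
    also have "(\<Sum>j=2..d. t' j) = (\<Sum>j=2..d. t j)" unfolding t'_def by (intro sum.cong) auto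
    also have "t' 1 + \<dots> = m - (\<Sum>j=1..d. t j) + (t 1 + (\<Sum>j=2..d. t j))" by (simp add: t'_def)
    also have "t 1 + (\<Sum>j=2..d. t j) = (\<Sum>j=1..d. t j)"
      using assms(2) by (simp add: sum.atLeast_Suc_atMost numeral_2_eq_2)
    finally have "(\<Sum>j=1..d. t' j) = m" using ts by simp
    moreover have "r j \<le> 2 ^ t' j" for j
    proof -
      have "(2::real) ^ t j \<le> 2 ^ t' j" by (intro power_increasing) (auto simp: t'_def)
      thus ?thesis using rt[of j] by linarith
    qed
    ultimately show "k \<in> hypcross_Q \<alpha> m \<gamma> d"
      unfolding hypcross_Q_def using kL by (auto simp: r_def intro!: exI[of _ t'])
  qed
next
  show "hypcross_Q \<alpha> m \<gamma> d \<subseteq> hypcross_K \<alpha> (2 ^ m) \<gamma> d"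
  proof
    fix k assume "k \<in> hypcross_Q \<alpha> m \<gamma> d"
    then obtain t where ts: "(\<Sum>j=1..d. t j) = m" and kL: "k \<in> lattice_vecs d"
      and kt: "\<And>j. j \<in> {1..d} \<Longrightarrow> r_alpha \<alpha> (\<gamma> j) (k j) \<le> 2 ^ t j"
      unfolding hypcross_Q_def by auto
    have "r_alpha_vec \<alpha> d \<gamma> k \<le> (\<Prod>j=1..d. (2::real) ^ t j)"
      unfolding r_alpha_vec_def
    proof (intro prod_mono conjI)
      fix j assume "j \<in> {1..d}"
      show "0 \<le> r_alpha \<alpha> (\<gamma> j) (k j)" using r_ge1[of \<alpha> "\<gamma> j" "k j"] by linarith
      show "r_alpha \<alpha> (\<gamma> j) (k j) \<le> 2 ^ t j" using kt \<open>j \<in> {1..d}\<close> .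
    qed
    also have "\<dots> = 2 ^ m" using ts power_sum[of "2::real" t "{1..d}"] by simp
    finally show "k \<in> hypcross_K \<alpha> (2 ^ m) \<gamma> d" unfolding hypcross_K_def using kL by auto
  qed
qed

end
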